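(* Let $r,M\ge 1$, $N\ge 1$ a real number, and ${\bf e}_{mn}\in\mathbb{C}^{r}$ ($1\le m,n\le M$) arbitrary vectors. Define, for ${\bf W}$ in the cone $\mathbb{H}^r_+$ of $r\times r$ positive semidefinite Hermitian matrices, $$g({\bf W};N)=\frac{1}{M}\sum_{m=1}^{M}\log\sum_{n=1}^{M}\Big(1+\tfrac12{\bf e}_{mn}^{\mathrm H}{\bf W}{\bf e}_{mn}\Big)^{-N}.$$ Then $g(\cdot;N)$ is convex on $\mathbb{H}^r_+$ and matrix nonincreasing there: if ${\bf W}_1\succeq{\bf W}_2\succeq{\bf 0}$ then $g({\bf W}_1;N)\le g({\bf W}_2;N)$.
   Context: $\log$ is the base-2 logarithm. ${\bf U}\succeq{\bf V}$ means ${\bf U}-{\bf V}$ is positive semidefinite. (In the paper's application ${\bf e}_{mn}={\bf x}_m-{\bf x}_n$ are differences of points of a finite constellation, but the claim holds for arbitrary vectors.) *)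

theory Defs
  imports "HOL-Analysis.Analysis"
begin

definition qform :: "complex^'r^'r \<Rightarrow> complex^'r \<Rightarrow> complex" where
  "qform W x = (\<Sum>i\<in>UNIV. \<Sum>j\<in>UNIV. cnj (x$i) * W$i$j * x$j)"

definition hermitian_mat :: "complex^'r^'r \<Rightarrow> bool" where
  "hermitian_mat W \<longleftrightarrow> (\<forall>i j. W$i$j = cnj (W$j$i))"

definition psd_herm :: "complex^'r^'r \<Rightarrow> bool" where
  "psd_herm W \<longleftrightarrow> hermitian_mat W \<and> (\<forall>x. qform W x \<in> \<real> \<and> 0 \<le> Re (qform W x))"

definition gfun :: "nat \<Rightarrow> (nat \<Rightarrow> nat \<Rightarrow> complex^'r) \<Rightarrow> real \<Rightarrow> complex^'r^'r \<Rightarrow> real" where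
  "gfun M e N W = (1 / real M) * (\<Sum>m\<in>{1..M}. log 2 (\<Sum>n\<in>{1..M}.
       (1 + Re (qform W (e m n)) / 2) powr (- N)))"

end

theory Submission
  imports Defs
begin

lemma qform_lin:
  "qform (a *\<^sub>R W + b *\<^sub>R V) x = of_real a * qform W x + of_real b * qform V x"
  unfolding qform_def
  apply (simp only: vector_add_component vector_scaleR_component)
  apply (simp add: scaleR_conv_of_real algebra_simps sum.distrib sum_distrib_left)
  done

lemma qform_diff: "qform (W - V) x = qform W x - qform V x"
  unfolding qform_def
  by (simp add: algebra_simps sum_subtractf)

lemma psd_convex: "convex {W::complex^'r^'r. psd_herm W}"
proof (rule convexI)
  fix x y :: "complex^'r^'r" and u v :: real
  assume x: "x \<in> {W. psd_herm W}" and y: "y \<in> {W. psd_herm W}" and uv: "0 \<le> u" "0 \<le> v" "u + v = 1"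
  have hx: "hermitian_mat x" "\<And>z. qform x z \<in> \<real> \<and> 0 \<le> Re (qform x z)" using x by (auto simp: psd_herm_def)
  have hy: "hermitian_mat y" "\<And>z. qform y z \<in> \<real> \<and> 0 \<le> Re (qform y z)" using y by (auto simp: psd_herm_def)
  have "hermitian_mat (u *\<^sub>R x + v *\<^sub>R y)"
    unfolding hermitian_mat_def
  proof (intro allI)
    fix i j
    have "x$i$j = cnj (x$j$i)" "y$i$j = cnj (y$j$i)" using hx(1) hy(1) unfolding hermitian_mat_def by blast+
    then show "(u *\<^sub>R x + v *\<^sub>R y) $ i $ j = cnj ((u *\<^sub>R x + v *\<^sub>R y) $ j $ i)"
      by (simp only: vector_add_component vector_scaleR_component) (simp add: scaleR_conv_of_real)
  qed
  moreover have "qform (u *\<^sub>R x + v *\<^sub>R y) z \<in> \<real> \<and> 0 \<le> Re (qform (u *\<^sub>R x + v *\<^sub>R y) z)" for z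
  proof -
    have a: "qform x z \<in> \<real>" "qform y z \<in> \<real>" "0 \<le> Re (qform x z)" "0 \<le> Re (qform y z)"
      using hx(2)[of z] hy(2)[of z] by auto
    have "of_real u * qform x z + of_real v * qform y z \<in> \<real>"
      using a by (intro Reals_add Reals_mult) auto
    moreover have "Re (of_real u * qform x z + of_real v * qform y z) = u * Re (qform x z) + v * Re (qform y z)"
      by simp
    ultimately show ?thesis using a uv unfolding qform_lin by simp
  qed
  ultimately show "u *\<^sub>R x + v *\<^sub>R y \<in> {W. psd_herm W}" by (simp add: psd_herm_def)
qed

lemma holder_sum:
  fixes a b :: "nat \<Rightarrow> real"
  assumes "finite S" "S \<noteq> {}" "\<And>n. n \<in> S \<Longrightarrow> a n > 0" "\<And>n. n \<in> S \<Longrightarrow> b n > 0"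
    "0 \<le> \<alpha>" "0 \<le> \<beta>" "\<alpha> + \<beta> = 1"
  shows "(\<Sum>n\<in>S. a n powr \<alpha> * b n powr \<beta>) \<le> (\<Sum>n\<in>S. a n) powr \<alpha> * (\<Sum>n\<in>S. b n) powr \<beta>"
proof -
  define A where "A = (\<Sum>n\<in>S. a n)"
  define B where "B = (\<Sum>n\<in>S. b n)"
  have A: "A > 0" unfolding A_def using assms by (intro sum_pos) auto
  have B: "B > 0" unfolding B_def using assms by (intro sum_pos) auto
  have "a n powr \<alpha> * b n powr \<beta> \<le> A powr \<alpha> * B powr \<beta> * ((\<alpha> / A) * a n + (\<beta> / B) * b n)"
    if n: "n \<in> S" for n
  proof -
    have "a n powr \<alpha> * b n powr \<beta> = A powr \<alpha> * B powr \<beta> * ((a n / A) powr \<alpha> * (b n / B) powr \<beta>)"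
      using A B assms(3,4)[OF n] by (simp add: powr_divide)
    also have "\<dots> \<le> A powr \<alpha> * B powr \<beta> * ((\<alpha> / A) * a n + (\<beta> / B) * b n)"
    proof -
      have "(a n / A) powr \<alpha> * (b n / B) powr \<beta> \<le> \<alpha> * (a n / A) + \<beta> * (b n / B)"
        using A B assms(3,4)[OF n] assms(5-7) by (intro Youngs_inequality_0) auto
      then show ?thesis using A B by (intro mult_left_mono) auto
    qed
    finally show ?thesis .
  qed
  then have "(\<Sum>n\<in>S. a n powr \<alpha> * b n powr \<beta>) \<le> (\<Sum>n\<in>S. A powr \<alpha> * B powr \<beta> * ((\<alpha> / A) * a n + (\<beta> / B) * b n))"
    by (rule sum_mono)
  also have "\<dots> = A powr \<alpha> * B powr \<beta> * ((\<alpha> / A) * (\<Sum>n\<in>S. a n) + (\<beta> / B) * (\<Sum>n\<in>S. b n))"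
    by (simp only: sum.distrib sum_distrib_left[symmetric])
  also have "\<dots> = A powr \<alpha> * B powr \<beta>"
    using A B assms(7) by (simp add: A_def[symmetric] B_def[symmetric])
  finally show ?thesis by (simp add: A_def B_def)
qed

lemma term_logconv:
  fixes x y N :: real
  assumes "x > 0" "y > 0" "N \<ge> 0" "0 \<le> \<alpha>" "0 \<le> \<beta>" "\<alpha> + \<beta> = 1"
  shows "(\<alpha> * x + \<beta> * y) powr (- N) \<le> (x powr (- N)) powr \<alpha> * (y powr (- N)) powr \<beta>"
proof -
  have "(x powr (- N)) powr \<alpha> * (y powr (- N)) powr \<beta> = (x powr \<alpha> * y powr \<beta>) powr (- N)"
    using assms by (simp add: powr_powr powr_mult mult.commute)
  moreover have "(\<alpha> * x + \<beta> * y) powr (- N) \<le> (x powr \<alpha> * y powr \<beta>) powr (- N)"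
    using assms by (intro powr_mono2' Youngs_inequality_0) auto
  ultimately show ?thesis by simp
qed

theorem proposition4:
  fixes M :: nat and N :: real and e :: "nat \<Rightarrow> nat \<Rightarrow> complex^'r"
  assumes "M \<ge> 1" and "N \<ge> 1"
  shows "convex_on {W. psd_herm W} (gfun M e N)
     \<and> (\<forall>W1 W2. psd_herm W2 \<and> psd_herm (W1 - W2) \<longrightarrow> gfun M e N W1 \<le> gfun M e N W2)"
proof
  define S where "S = (\<lambda>W m. \<Sum>n\<in>{1..M}. (1 + Re (qform W (e m n)) / 2) powr (- N))"
  have g: "gfun M e N W = (1 / real M) * (\<Sum>m\<in>{1..M}. log 2 (S W m))" for W
    by (simp add: gfun_def S_def)
  have nn: "0 \<le> Re (qform W x)" if "psd_herm W" for W :: "complex^'r^'r" and x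
    using that by (simp add: psd_herm_def)
  have pos: "0 < 1 + Re (qform W x) / 2" if "psd_herm W" for W :: "complex^'r^'r" and x
    using nn[OF that, of x] by simp
  have tpos: "0 < (1 + Re (qform W x) / 2) powr (- N)" if "psd_herm W" for W :: "complex^'r^'r" and x
      using pos[OF that, of x] by (smt (verit) powr_gt_zero)
  have Spos: "S W m > 0" if "psd_herm W" for W m
    unfolding S_def using assms(1) tpos[OF that] by (intro sum_pos) auto
  show "convex_on {W. psd_herm W} (gfun M e N)"
  proof (rule convex_onI[OF _ psd_convex])
    fix t :: real and W V :: "complex^'r^'r"
    assume t: "0 < t" "t < 1" and W: "W \<in> {W. psd_herm W}" and V: "V \<in> {W. psd_herm W}"
    define Z where "Z = (1 - t) *\<^sub>R W + t *\<^sub>R V"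
    have SZ: "S Z m \<le> S W m powr (1 - t) * S V m powr t" for m
    proof -
      have "S Z m = (\<Sum>n\<in>{1..M}. ((1 - t) * (1 + Re (qform W (e m n)) / 2) + t * (1 + Re (qform V (e m n)) / 2)) powr (- N))"
        unfolding S_def Z_def qform_lin by (simp add: algebra_simps add_divide_distrib diff_divide_distrib)
      also have "\<dots> \<le> (\<Sum>n\<in>{1..M}. ((1 + Re (qform W (e m n)) / 2) powr (- N)) powr (1 - t) * ((1 + Re (qform V (e m n)) / 2) powr (- N)) powr t)"
        using t assms(2) pos W V by (intro sum_mono term_logconv) auto
      also have "\<dots> \<le> S W m powr (1 - t) * S V m powr t"
        unfolding S_def using t assms(1) tpos W V by (intro holder_sum) auto
      finally show ?thesis .
    qed
    have "log 2 (S Z m) \<le> (1 - t) * log 2 (S W m) + t * log 2 (S V m)" for m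
    proof -
      have "log 2 (S Z m) \<le> log 2 (S W m powr (1 - t) * S V m powr t)"
      proof -
        have "Z \<in> {W. psd_herm W}" unfolding Z_def using W V t by (intro convexD[OF psd_convex]) auto
        then have "0 < S Z m" using Spos by auto
        moreover have "0 < S W m" "0 < S V m" using Spos W V by auto
        ultimately show ?thesis using SZ[of m] by (subst log_le_cancel_iff) auto
      qed
      also have "\<dots> = (1 - t) * log 2 (S W m) + t * log 2 (S V m)"
      proof -
        have "0 < S W m" "0 < S V m" using Spos W V by auto
        then show ?thesis by (simp add: log_mult log_powr)
      qed
      finally show ?thesis .
    qed
    then have "(\<Sum>m\<in>{1..M}. log 2 (S Z m)) \<le> (\<Sum>m\<in>{1..M}. (1 - t) * log 2 (S W m) + t * log 2 (S V m))"
      by (rule sum_mono)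
    then have "(1 / real M) * (\<Sum>m\<in>{1..M}. log 2 (S Z m)) \<le> (1 / real M) * (\<Sum>m\<in>{1..M}. (1 - t) * log 2 (S W m) + t * log 2 (S V m))"
      by (intro mult_left_mono) auto
    then show "gfun M e N ((1 - t) *\<^sub>R W + t *\<^sub>R V) \<le> (1 - t) * gfun M e N W + t * gfun M e N V"
    proof -
      have "(1 / real M) * (\<Sum>m\<in>{1..M}. (1 - t) * log 2 (S W m) + t * log 2 (S V m))
          = (1 - t) * ((1 / real M) * (\<Sum>m\<in>{1..M}. log 2 (S W m))) + t * ((1 / real M) * (\<Sum>m\<in>{1..M}. log 2 (S V m)))"
        by (simp only: sum.distrib sum_distrib_left[symmetric]) (simp add: algebra_simps add_divide_distrib diff_divide_distrib)
      with \<open>(1 / real M) * (\<Sum>m\<in>{1..M}. log 2 (S Z m)) \<le> _\<close> show ?thesis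
        unfolding g Z_def[symmetric] by simp
    qed
  qed
  show "\<forall>W1 W2. psd_herm W2 \<and> psd_herm (W1 - W2) \<longrightarrow> gfun M e N W1 \<le> gfun M e N W2"
  proof (intro allI impI)
    fix W1 W2 :: "complex^'r^'r"
    assume h: "psd_herm W2 \<and> psd_herm (W1 - W2)"
    have le: "Re (qform W2 x) \<le> Re (qform W1 x)" for x
      using nn[of "W1 - W2" x] h by (simp add: qform_diff)
    have W1: "psd_herm W1"
    proof -
      have "hermitian_mat W1" unfolding hermitian_mat_def
      proof (intro allI)
        fix i j
        have "W2$i$j = cnj (W2$j$i)" "(W1 - W2)$i$j = cnj ((W1 - W2)$j$i)"
          using h unfolding psd_herm_def hermitian_mat_def by blast+
        then show "W1$i$j = cnj (W1$j$i)" by simp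
      qed
      moreover have "qform W1 x \<in> \<real> \<and> 0 \<le> Re (qform W1 x)" for x
      proof -
        have "qform W1 x = qform W2 x + qform (W1 - W2) x" by (simp add: qform_diff)
        moreover have "qform W2 x \<in> \<real>" "qform (W1 - W2) x \<in> \<real>" "0 \<le> Re (qform W2 x)" "0 \<le> Re (qform (W1 - W2) x)"
          using h unfolding psd_herm_def by blast+
        ultimately show ?thesis by auto
      qed
      ultimately show ?thesis unfolding psd_herm_def by blast
    qed
    have "S W1 m \<le> S W2 m" for m
      unfolding S_def using le pos W1 h assms(2)
      by (intro sum_mono powr_mono2') auto
    moreover have "0 < S W1 m" "0 < S W2 m" for m using Spos W1 h by auto
    ultimately have "log 2 (S W1 m) \<le> log 2 (S W2 m)" for m
      by (subst log_le_cancel_iff) auto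
    then show "gfun M e N W1 \<le> gfun M e N W2"
      unfolding g by (intro mult_left_mono sum_mono) auto
  qed
qed

end
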